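(* Let $\mathcal{H}=(V,\vec H,\bm{w})$ be a finite, loopless, strongly connected, weighted directed hypergraph with $|V|\ge2$. For every hyperedge $h\in\vec H$, the function $\alpha\mapsto\kappa_\alpha(h)$ is concave on $[0,1]$.
   Context: A weighted directed hypergraph $(V,\vec H,\bm{w})$ has a finite vertex set $V$, a finite set $\vec H$ of hyperedges, each an ordered pair $h=(A_h,B_h)$ of nonempty subsets of $V$ (input and output), and positive weights $w_h>0$. It is loopless if $A_h\cap B_h=\emptyset$ for all $h$. A directed path from $u$ to $v$ is a sequence of hyperedges $h_1,\dots,h_l$ with $u\in A_{h_1}$, $v\in B_{h_l}$ and $B_{h_j}\cap A_{h_{j+1}}\ne\emptyset$ for $1\le j\le l-1$; the hypergraph is strongly connected if for all distinct $u,v$ there is a directed path from $u$ to $v$. The quasi-distance is $d(u,v)=\inf_\gamma\sum_{h\in\gamma}w_h$ over directed paths from $u$ to $v$ ($u\ne v$), $d(u,u)=0$. For $h=(A_h,B_h)$, $L(h)=\min_{x\in A_h,y\in B_h}d(x,y)$. Neighborhoods: $\Gamma^{in}(v)=\{z:\exists h'\text{ with }v\in B_{h'},z\in A_{h'}\}$, $\Gamma^{out}(v)=\{z:\exists h'\text{ with }v\in A_{h'},z\in B_{h'}\}$. For $h$ with $A_h=\{x_1,\dots,x_n\}$, $B_h=\{y_1,\dots,y_m\}$ and $\alpha\in[0,1]$, define $\mu^\alpha_{A_h}=\sum_{i=1}^n\mu^\alpha_{x_i}$ where $\mu^\alpha_{x_i}(x_i)=\alpha/n$, $\mu^\alpha_{x_i}(z)=(1-\alpha)\sum_{h':x_i\in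 B_{h'},z\in A_{h'}}\frac{1}{n|A_{h'}|}\frac{w_{h'}}{\sum_{h'':x_i\in B_{h''}}w_{h''}}$ for $z\in\Gamma^{in}(x_i)$, and $0$ otherwise; and $\mu^\alpha_{B_h}=\sum_{j=1}^m\mu^\alpha_{y_j}$ where $\mu^\alpha_{y_j}(y_j)=\alpha/m$, $\mu^\alpha_{y_j}(z)=(1-\alpha)\sum_{h':y_j\in A_{h'},z\in B_{h'}}\frac{1}{m|B_{h'}|}\frac{w_{h'}}{\sum_{h'':y_j\in A_{h''}}w_{h''}}$ for $z\in\Gamma^{out}(y_j)$, and $0$ otherwise. These are probability measures on $V$. For probability measures $\mu,\nu$, $W(\mu,\nu)=\inf_\pi\sum_{u,v\in V}\pi(u,v)d(u,v)$ over couplings $\pi$ (with $\sum_v\pi(u,v)=\mu(u)$, $\sum_u\pi(u,v)=\nu(v)$). Finally $\kappa_\alpha(h)=1-\frac{W(\mu^\alpha_{A_h},\mu^\alpha_{B_h})}{L(h)}$. *)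

theory Defs
  imports "HOL-Analysis.Analysis"
begin

text \<open>Hyperedges are pairs (A_h, B_h) of vertex sets; a weighted directed hypergraph is
  given by a vertex set V, a set H of hyperedges and a weight function w.\<close>

type_synonym 'v hedge = "'v set \<times> 'v set"

definition wdhypergraph :: "'v set \<Rightarrow> 'v hedge set \<Rightarrow> ('v hedge \<Rightarrow> real) \<Rightarrow> bool" where
  "wdhypergraph V H w \<longleftrightarrow> finite V \<and> finite H \<and>
     (\<forall>h\<in>H. fst h \<noteq> {} \<and> snd h \<noteq> {} \<and> fst h \<subseteq> V \<and> snd h \<subseteq> V \<and> w h > 0)"

definition loopless :: "'v hedge set \<Rightarrow> bool" where
  "loopless H \<longleftrightarrow> (\<forall>h\<in>H. fst h \<inter> snd h = {})"

definition is_dpath :: "'v hedge set \<Rightarrow> 'v \<Rightarrow> 'v \<Rightarrow> 'v hedge list \<Rightarrow> bool" where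
  "is_dpath H u v hs \<longleftrightarrow> hs \<noteq> [] \<and> set hs \<subseteq> H \<and>
     u \<in> fst (hd hs) \<and> v \<in> snd (last hs) \<and>
     (\<forall>j. j + 1 < length hs \<longrightarrow> snd (hs ! j) \<inter> fst (hs ! (j + 1)) \<noteq> {})"

definition strongly_connected :: "'v set \<Rightarrow> 'v hedge set \<Rightarrow> bool" where
  "strongly_connected V H \<longleftrightarrow>
     (\<forall>u\<in>V. \<forall>v\<in>V. u \<noteq> v \<longrightarrow> (\<exists>hs. is_dpath H u v hs))"

definition qdist :: "'v hedge set \<Rightarrow> ('v hedge \<Rightarrow> real) \<Rightarrow> 'v \<Rightarrow> 'v \<Rightarrow> real" where
  "qdist H w u v = (if u = v then 0
     else Inf {sum_list (map w hs) | hs. is_dpath H u v hs})"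

definition Lh :: "'v hedge set \<Rightarrow> ('v hedge \<Rightarrow> real) \<Rightarrow> 'v hedge \<Rightarrow> real" where
  "Lh H w h = Min {qdist H w x y | x y. x \<in> fst h \<and> y \<in> snd h}"

definition mu_in_vertex :: "'v hedge set \<Rightarrow> ('v hedge \<Rightarrow> real) \<Rightarrow> real \<Rightarrow> nat \<Rightarrow> 'v \<Rightarrow> 'v \<Rightarrow> real" where
  "mu_in_vertex H w \<alpha> n x z =
     (if z = x then \<alpha> / real n
      else (1 - \<alpha>) * (\<Sum>h'\<in>{h'\<in>H. x \<in> snd h' \<and> z \<in> fst h'}.
              (1 / (real n * real (card (fst h')))) *
              (w h' / (\<Sum>h''\<in>{h''\<in>H. x \<in> snd h''}. w h''))))"

definition mu_out_vertex :: "'v hedge set \<Rightarrow> ('v hedge \<Rightarrow> real) \<Rightarrow> real \<Rightarrow> nat \<Rightarrow> 'v \<Rightarrow> 'v \<Rightarrow> real" where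
  "mu_out_vertex H w \<alpha> m y z =
     (if z = y then \<alpha> / real m
      else (1 - \<alpha>) * (\<Sum>h'\<in>{h'\<in>H. y \<in> fst h' \<and> z \<in> snd h'}.
              (1 / (real m * real (card (snd h')))) *
              (w h' / (\<Sum>h''\<in>{h''\<in>H. y \<in> fst h''}. w h''))))"

definition mu_A :: "'v hedge set \<Rightarrow> ('v hedge \<Rightarrow> real) \<Rightarrow> real \<Rightarrow> 'v hedge \<Rightarrow> 'v \<Rightarrow> real" where
  "mu_A H w \<alpha> h z = (\<Sum>x\<in>fst h. mu_in_vertex H w \<alpha> (card (fst h)) x z)"

definition mu_B :: "'v hedge set \<Rightarrow> ('v hedge \<Rightarrow> real) \<Rightarrow> real \<Rightarrow> 'v hedge \<Rightarrow> 'v \<Rightarrow> real" where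
  "mu_B H w \<alpha> h z = (\<Sum>y\<in>snd h. mu_out_vertex H w \<alpha> (card (snd h)) y z)"

definition coupling :: "'v set \<Rightarrow> ('v \<Rightarrow> real) \<Rightarrow> ('v \<Rightarrow> real) \<Rightarrow> ('v \<Rightarrow> 'v \<Rightarrow> real) \<Rightarrow> bool" where
  "coupling V \<mu> \<nu> \<pi> \<longleftrightarrow> (\<forall>u\<in>V. \<forall>v\<in>V. \<pi> u v \<ge> 0) \<and>
     (\<forall>u\<in>V. (\<Sum>v\<in>V. \<pi> u v) = \<mu> u) \<and> (\<forall>v\<in>V. (\<Sum>u\<in>V. \<pi> u v) = \<nu> v)"

definition wasserstein :: "'v set \<Rightarrow> 'v hedge set \<Rightarrow> ('v hedge \<Rightarrow> real) \<Rightarrow> ('v \<Rightarrow> real) \<Rightarrow> ('v \<Rightarrow> real) \<Rightarrow> real" where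
  "wasserstein V H w \<mu> \<nu> =
     Inf {(\<Sum>u\<in>V. \<Sum>v\<in>V. \<pi> u v * qdist H w u v) | \<pi>. coupling V \<mu> \<nu> \<pi>}"

definition kappa :: "'v set \<Rightarrow> 'v hedge set \<Rightarrow> ('v hedge \<Rightarrow> real) \<Rightarrow> real \<Rightarrow> 'v hedge \<Rightarrow> real" where
  "kappa V H w \<alpha> h = 1 - wasserstein V H w (mu_A H w \<alpha> h) (mu_B H w \<alpha> h) / Lh H w h"

end

theory Submission
  imports Defs
begin

lemma inf_comb:
  fixes X Y :: "real set"
  assumes "X \<noteq> {}" "Y \<noteq> {}" "0 \<le> u" "0 \<le> v" "u + v = 1"
    and H: "\<And>x y. x \<in> X \<Longrightarrow> y \<in> Y \<Longrightarrow> z \<le> u * x + v * y"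
  shows "z \<le> u * Inf X + v * Inf Y"
proof (cases "u = 0")
  case True
  then have "v = 1" using assms by simp
  then have "z \<le> Inf Y" using H assms True
    by (intro cInf_greatest) (auto)
  then show ?thesis using True \<open>v = 1\<close> by simp
next
  case u0: False
  show ?thesis
  proof (cases "v = 0")
    case True
    then have "u = 1" using assms by simp
    then have "z \<le> Inf X" using H assms True
      by (intro cInf_greatest) (auto)
    then show ?thesis using True \<open>u = 1\<close> by simp
  next
    case v0: False
    have up: "u > 0" "v > 0" using u0 v0 assms by auto
    have "(z - u * Inf X) / v \<le> Inf Y"
    proof (rule cInf_greatest[OF assms(2)])
      fix y assume y: "y \<in> Y"
      have "(z - v * y) / u \<le> Inf X"
      proof (rule cInf_greatest[OF assms(1)])
        fix x assume "x \<in> X"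
        then have "z \<le> u * x + v * y" using H y by auto
        then show "(z - v * y) / u \<le> x" using up by (simp add: field_simps)
      qed
      then have "z - u * Inf X \<le> v * y" using up by (simp add: field_simps)
      then show "(z - u * Inf X) / v \<le> y" using up by (simp add: field_simps)
    qed
    then show ?thesis using up by (simp add: field_simps)
  qed
qed

lemma qdist_nonneg:
  assumes "wdhypergraph V H w" "strongly_connected V H" "u \<in> V" "v \<in> V"
  shows "0 \<le> qdist H w u v"
proof (cases "u = v")
  case True then show ?thesis by (simp add: qdist_def)
next
  case False
  then obtain hs where hs: "is_dpath H u v hs"
    using assms unfolding strongly_connected_def by blast
  have "0 \<le> Inf {sum_list (map w hs) | hs. is_dpath H u v hs}"
  proof (rule cInf_greatest)
    show "{sum_list (map w hs) | hs. is_dpath H u v hs} \<noteq> {}" using hs by blast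
  next
    fix x assume "x \<in> {sum_list (map w hs) | hs. is_dpath H u v hs}"
    then obtain gs where "x = sum_list (map w gs)" "is_dpath H u v gs" by blast
    moreover have "\<forall>g\<in>set gs. 0 \<le> w g" using \<open>is_dpath H u v gs\<close> assms(1)
      unfolding is_dpath_def wdhypergraph_def by (auto intro: less_imp_le)
    ultimately show "0 \<le> x" by (auto intro!: sum_list_nonneg)
  qed
  then show ?thesis using False by (simp add: qdist_def)
qed

lemma mu_in_affine:
  "mu_in_vertex H w (u * a + v * b) n x z = u * mu_in_vertex H w a n x z + v * mu_in_vertex H w b n x z"
  if "u + v = 1" for u v :: real
proof -
  have v: "v = 1 - u" using that by simp
  show ?thesis unfolding mu_in_vertex_def v by (cases "z = x") (simp_all add: algebra_simps add_divide_distrib[symmetric] diff_divide_distrib[symmetric])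
qed

lemma mu_out_affine:
  "mu_out_vertex H w (u * a + v * b) n x z = u * mu_out_vertex H w a n x z + v * mu_out_vertex H w b n x z"
  if "u + v = 1" for u v :: real
proof -
  have v: "v = 1 - u" using that by simp
  show ?thesis unfolding mu_out_vertex_def v by (cases "z = x") (simp_all add: algebra_simps add_divide_distrib[symmetric] diff_divide_distrib[symmetric])
qed

lemma mu_A_affine:
  "u + v = 1 \<Longrightarrow> mu_A H w (u * a + v * b) h z = u * mu_A H w a h z + v * mu_A H w b h z"
  unfolding mu_A_def by (simp add: mu_in_affine sum.distrib sum_distrib_left)

lemma mu_B_affine:
  "u + v = 1 \<Longrightarrow> mu_B H w (u * a + v * b) h z = u * mu_B H w a h z + v * mu_B H w b h z"
  unfolding mu_B_def by (simp add: mu_out_affine sum.distrib sum_distrib_left)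

lemma mu_A_nonneg:
  assumes "wdhypergraph V H w" "0 \<le> \<alpha>" "\<alpha> \<le> 1"
  shows "0 \<le> mu_A H w \<alpha> h z"
proof -
  have wp: "\<And>h'. h' \<in> H \<Longrightarrow> 0 \<le> w h'" using assms(1) unfolding wdhypergraph_def
    by (auto intro: less_imp_le)
  show ?thesis unfolding mu_A_def mu_in_vertex_def using assms
    by (auto intro!: sum_nonneg mult_nonneg_nonneg divide_nonneg_nonneg wp)
qed

lemma mu_B_nonneg:
  assumes "wdhypergraph V H w" "0 \<le> \<alpha>" "\<alpha> \<le> 1"
  shows "0 \<le> mu_B H w \<alpha> h z"
proof -
  have wp: "\<And>h'. h' \<in> H \<Longrightarrow> 0 \<le> w h'" using assms(1) unfolding wdhypergraph_def
    by (auto intro: less_imp_le)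
  show ?thesis unfolding mu_B_def mu_out_vertex_def using assms
    by (auto intro!: sum_nonneg mult_nonneg_nonneg divide_nonneg_nonneg wp)
qed

lemma in_edge_exists:
  assumes "strongly_connected V H" "card V \<ge> 2" "x \<in> V"
  shows "\<exists>h'\<in>H. x \<in> snd h'" "\<exists>h'\<in>H. x \<in> fst h'"
proof -
  have "finite V" using assms(2) by (metis card.infinite not_numeral_le_zero)
  have "V - {x} \<noteq> {}"
  proof
    assume "V - {x} = {}"
    then have "V \<subseteq> {x}" by blast
    then have "card V \<le> card {x}" by (intro card_mono) auto
    then show False using assms(2) by simp
  qed
  then obtain u where u: "u \<in> V" "u \<noteq> x" by blast
  obtain hs where "is_dpath H u x hs" using assms u unfolding strongly_connected_def by metis
  then show "\<exists>h'\<in>H. x \<in> snd h'" unfolding is_dpath_def by (metis last_in_set subsetD)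
  obtain gs where "is_dpath H x u gs" using assms u unfolding strongly_connected_def by metis
  then show "\<exists>h'\<in>H. x \<in> fst h'" unfolding is_dpath_def by (metis hd_in_set subsetD)
qed

lemma mass_in:
  assumes wd: "wdhypergraph V H w" and ll: "loopless H" and sc: "strongly_connected V H"
    and cV: "card V \<ge> 2" and x: "x \<in> V"
  shows "(\<Sum>z\<in>V. mu_in_vertex H w \<alpha> n x z) = 1 / real n"
proof -
  have fV: "finite V" and fH: "finite H" using wd unfolding wdhypergraph_def by auto
  define Hx where "Hx = {h'\<in>H. x \<in> snd h'}"
  define Wx where "Wx = (\<Sum>h''\<in>Hx. w h'')"
  define g where "g h' = (1 / (real n * real (card (fst h')))) * (w h' / Wx)" for h'
  have fHx: "finite Hx" using fH unfolding Hx_def by auto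
  have Wpos: "Wx > 0"
  proof -
    obtain h0 where "h0 \<in> H" "x \<in> snd h0" using in_edge_exists[OF sc cV x] by blast
    then have "h0 \<in> Hx" unfolding Hx_def by auto
    moreover have "\<forall>h'\<in>Hx. 0 < w h'" using wd unfolding Hx_def wdhypergraph_def by auto
    ultimately show ?thesis unfolding Wx_def using fHx
      by (metis empty_iff sum_pos)
  qed
  have "(\<Sum>z\<in>V - {x}. \<Sum>h'\<in>{h'\<in>H. x \<in> snd h' \<and> z \<in> fst h'}. g h')
      = (\<Sum>z\<in>V - {x}. \<Sum>h'\<in>Hx. if z \<in> fst h' then g h' else 0)"
  proof (rule sum.cong[OF refl])
    fix z
    have "{h'\<in>H. x \<in> snd h' \<and> z \<in> fst h'} = {h'\<in>Hx. z \<in> fst h'}" unfolding Hx_def by auto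
    then show "(\<Sum>h'\<in>{h'\<in>H. x \<in> snd h' \<and> z \<in> fst h'}. g h') = (\<Sum>h'\<in>Hx. if z \<in> fst h' then g h' else 0)"
      using fHx by (simp add: sum.inter_filter)
  qed
  also have "\<dots> = (\<Sum>h'\<in>Hx. \<Sum>z\<in>V - {x}. if z \<in> fst h' then g h' else 0)"
    by (rule sum.swap)
  also have "\<dots> = (\<Sum>h'\<in>Hx. w h' / (real n * Wx))"
  proof (rule sum.cong[OF refl])
    fix h' assume h': "h' \<in> Hx"
    then have sub: "fst h' \<subseteq> V - {x}" and ne: "fst h' \<noteq> {}"
      using wd ll unfolding Hx_def wdhypergraph_def loopless_def by auto
    have ff: "finite (fst h')" using sub fV finite_subset by blast
    have "{z \<in> V - {x}. z \<in> fst h'} = fst h'" using sub by auto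
    then have "(\<Sum>z\<in>V - {x}. if z \<in> fst h' then g h' else 0) = real (card (fst h')) * g h'"
      using fV by (simp add: sum.inter_filter[symmetric])
    also have "\<dots> = w h' / (real n * Wx)"
      using ff ne unfolding g_def by (simp add: card_gt_0_iff field_simps)
    finally show "(\<Sum>z\<in>V - {x}. if z \<in> fst h' then g h' else 0) = w h' / (real n * Wx)" .
  qed
  also have "\<dots> = Wx / (real n * Wx)" unfolding Wx_def by (simp add: sum_divide_distrib)
  also have "\<dots> = 1 / real n" using Wpos by simp
  finally have key: "(\<Sum>z\<in>V - {x}. \<Sum>h'\<in>{h'\<in>H. x \<in> snd h' \<and> z \<in> fst h'}. g h') = 1 / real n" .
  have "(\<Sum>z\<in>V. mu_in_vertex H w \<alpha> n x z) = mu_in_vertex H w \<alpha> n x x + (\<Sum>z\<in>V - {x}. mu_in_vertex H w \<alpha> n x z)"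
    using fV x by (simp add: sum.remove)
  also have "(\<Sum>z\<in>V - {x}. mu_in_vertex H w \<alpha> n x z) = (1 - \<alpha>) * (\<Sum>z\<in>V - {x}. \<Sum>h'\<in>{h'\<in>H. x \<in> snd h' \<and> z \<in> fst h'}. g h')"
    unfolding sum_distrib_left
    by (rule sum.cong[OF refl]) (auto simp: mu_in_vertex_def g_def Wx_def Hx_def sum_distrib_left)
  finally show ?thesis using key by (simp add: mu_in_vertex_def add_divide_distrib[symmetric] diff_divide_distrib[symmetric] algebra_simps)
qed


lemma mass_out:
  assumes wd: "wdhypergraph V H w" and ll: "loopless H" and sc: "strongly_connected V H"
    and cV: "card V \<ge> 2" and x: "x \<in> V"
  shows "(\<Sum>z\<in>V. mu_out_vertex H w \<alpha> n x z) = 1 / real n"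
proof -
  have fV: "finite V" and fH: "finite H" using wd unfolding wdhypergraph_def by auto
  define Hx where "Hx = {h'\<in>H. x \<in> fst h'}"
  define Wx where "Wx = (\<Sum>h''\<in>Hx. w h'')"
  define g where "g h' = (1 / (real n * real (card (snd h')))) * (w h' / Wx)" for h'
  have fHx: "finite Hx" using fH unfolding Hx_def by auto
  have Wpos: "Wx > 0"
  proof -
    obtain h0 where "h0 \<in> H" "x \<in> fst h0" using in_edge_exists(2)[OF sc cV x] by blast
    then have "h0 \<in> Hx" unfolding Hx_def by auto
    moreover have "\<forall>h'\<in>Hx. 0 < w h'" using wd unfolding Hx_def wdhypergraph_def by auto
    ultimately show ?thesis unfolding Wx_def using fHx
      by (metis empty_iff sum_pos)
  qed
  have "(\<Sum>z\<in>V - {x}. \<Sum>h'\<in>{h'\<in>H. x \<in> fst h' \<and> z \<in> snd h'}. g h')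
      = (\<Sum>z\<in>V - {x}. \<Sum>h'\<in>Hx. if z \<in> snd h' then g h' else 0)"
  proof (rule sum.cong[OF refl])
    fix z
    have "{h'\<in>H. x \<in> fst h' \<and> z \<in> snd h'} = {h'\<in>Hx. z \<in> snd h'}" unfolding Hx_def by auto
    then show "(\<Sum>h'\<in>{h'\<in>H. x \<in> fst h' \<and> z \<in> snd h'}. g h') = (\<Sum>h'\<in>Hx. if z \<in> snd h' then g h' else 0)"
      using fHx by (simp add: sum.inter_filter)
  qed
  also have "\<dots> = (\<Sum>h'\<in>Hx. \<Sum>z\<in>V - {x}. if z \<in> snd h' then g h' else 0)"
    by (rule sum.swap)
  also have "\<dots> = (\<Sum>h'\<in>Hx. w h' / (real n * Wx))"
  proof (rule sum.cong[OF refl])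
    fix h' assume h': "h' \<in> Hx"
    then have sub: "snd h' \<subseteq> V - {x}" and ne: "snd h' \<noteq> {}"
      using wd ll unfolding Hx_def wdhypergraph_def loopless_def by auto
    have ff: "finite (snd h')" using sub fV finite_subset by blast
    have "{z \<in> V - {x}. z \<in> snd h'} = snd h'" using sub by auto
    then have "(\<Sum>z\<in>V - {x}. if z \<in> snd h' then g h' else 0) = real (card (snd h')) * g h'"
      using fV by (simp add: sum.inter_filter[symmetric])
    also have "\<dots> = w h' / (real n * Wx)"
      using ff ne unfolding g_def by (simp add: card_gt_0_iff field_simps)
    finally show "(\<Sum>z\<in>V - {x}. if z \<in> snd h' then g h' else 0) = w h' / (real n * Wx)" .
  qed
  also have "\<dots> = Wx / (real n * Wx)" unfolding Wx_def by (simp add: sum_divide_distrib)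
  also have "\<dots> = 1 / real n" using Wpos by simp
  finally have key: "(\<Sum>z\<in>V - {x}. \<Sum>h'\<in>{h'\<in>H. x \<in> fst h' \<and> z \<in> snd h'}. g h') = 1 / real n" .
  have "(\<Sum>z\<in>V. mu_out_vertex H w \<alpha> n x z) = mu_out_vertex H w \<alpha> n x x + (\<Sum>z\<in>V - {x}. mu_out_vertex H w \<alpha> n x z)"
    using fV x by (simp add: sum.remove)
  also have "(\<Sum>z\<in>V - {x}. mu_out_vertex H w \<alpha> n x z) = (1 - \<alpha>) * (\<Sum>z\<in>V - {x}. \<Sum>h'\<in>{h'\<in>H. x \<in> fst h' \<and> z \<in> snd h'}. g h')"
    unfolding sum_distrib_left
    by (rule sum.cong[OF refl]) (auto simp: mu_out_vertex_def g_def Wx_def Hx_def sum_distrib_left)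
  finally show ?thesis using key by (simp add: mu_out_vertex_def add_divide_distrib[symmetric] diff_divide_distrib[symmetric] algebra_simps)
qed

lemma mass_A:
  assumes wd: "wdhypergraph V H w" and ll: "loopless H" and sc: "strongly_connected V H"
    and cV: "card V \<ge> 2" and h: "h \<in> H"
  shows "(\<Sum>z\<in>V. mu_A H w \<alpha> h z) = 1"
proof -
  have fV: "finite V" using wd unfolding wdhypergraph_def by auto
  have sub: "fst h \<subseteq> V" "fst h \<noteq> {}" using wd h unfolding wdhypergraph_def by auto
  then have ff: "finite (fst h)" using fV finite_subset by blast
  have "(\<Sum>z\<in>V. mu_A H w \<alpha> h z) = (\<Sum>x\<in>fst h. \<Sum>z\<in>V. mu_in_vertex H w \<alpha> (card (fst h)) x z)"
    unfolding mu_A_def by (rule sum.swap)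
  also have "\<dots> = (\<Sum>x\<in>fst h. 1 / real (card (fst h)))"
    using mass_in[OF wd ll sc cV] sub by (intro sum.cong) auto
  also have "\<dots> = 1" using ff sub by (simp add: card_gt_0_iff)
  finally show ?thesis .
qed

lemma mass_B:
  assumes wd: "wdhypergraph V H w" and ll: "loopless H" and sc: "strongly_connected V H"
    and cV: "card V \<ge> 2" and h: "h \<in> H"
  shows "(\<Sum>z\<in>V. mu_B H w \<alpha> h z) = 1"
proof -
  have fV: "finite V" using wd unfolding wdhypergraph_def by auto
  have sub: "snd h \<subseteq> V" "snd h \<noteq> {}" using wd h unfolding wdhypergraph_def by auto
  then have ff: "finite (snd h)" using fV finite_subset by blast
  have "(\<Sum>z\<in>V. mu_B H w \<alpha> h z) = (\<Sum>x\<in>snd h. \<Sum>z\<in>V. mu_out_vertex H w \<alpha> (card (snd h)) x z)"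
    unfolding mu_B_def by (rule sum.swap)
  also have "\<dots> = (\<Sum>x\<in>snd h. 1 / real (card (snd h)))"
    using mass_out[OF wd ll sc cV] sub by (intro sum.cong) auto
  also have "\<dots> = 1" using ff sub by (simp add: card_gt_0_iff)
  finally show ?thesis .
qed

lemma coupling_exists:
  assumes "\<And>z. 0 \<le> \<mu> z" "\<And>z. 0 \<le> \<nu> z" "(\<Sum>z\<in>V. \<mu> z) = 1" "(\<Sum>z\<in>V. \<nu> z) = 1"
  shows "coupling V \<mu> \<nu> (\<lambda>u v. \<mu> u * \<nu> v)"
  unfolding coupling_def using assms by (simp add: sum_distrib_left[symmetric] sum_distrib_right[symmetric])

lemma Lh_nonneg:
  assumes wd: "wdhypergraph V H w" and sc: "strongly_connected V H" and h: "h \<in> H"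
  shows "0 \<le> Lh H w h"
proof -
  have fV: "finite V" using wd unfolding wdhypergraph_def by auto
  have sub: "fst h \<subseteq> V" "fst h \<noteq> {}" "snd h \<subseteq> V" "snd h \<noteq> {}" using wd h unfolding wdhypergraph_def by auto
  have eq: "{qdist H w x y | x y. x \<in> fst h \<and> y \<in> snd h} = (\<lambda>(x,y). qdist H w x y) ` (fst h \<times> snd h)"
    by auto
  have fin: "finite (fst h \<times> snd h)" using sub fV finite_subset by blast
  show ?thesis unfolding Lh_def eq
    using fin sub qdist_nonneg[OF wd sc] by (subst Min_ge_iff) auto
qed

theorem mainTheorem5:
  fixes V :: "'v set" and H :: "'v hedge set" and w :: "'v hedge \<Rightarrow> real" and h :: "'v hedge"
  assumes "wdhypergraph V H w"
    and "loopless H"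
    and "strongly_connected V H"
    and "card V \<ge> 2"
    and "h \<in> H"
  shows "concave_on {0..1} (\<lambda>\<alpha>. kappa V H w \<alpha> h)"
proof -
  note wd = assms(1) and ll = assms(2) and sc = assms(3) and cV = assms(4) and h = assms(5)
  define cost where "cost \<pi> = (\<Sum>u\<in>V. \<Sum>v\<in>V. \<pi> u v * qdist H w u v)" for \<pi> :: "'v \<Rightarrow> 'v \<Rightarrow> real"
  define S where "S \<alpha> = {cost \<pi> | \<pi>. coupling V (mu_A H w \<alpha> h) (mu_B H w \<alpha> h) \<pi>}" for \<alpha>
  define W where "W \<alpha> = wasserstein V H w (mu_A H w \<alpha> h) (mu_B H w \<alpha> h)" for \<alpha>
  have WS: "W \<alpha> = Inf (S \<alpha>)" for \<alpha> unfolding W_def S_def wasserstein_def cost_def by simp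
  have Sne: "S \<alpha> \<noteq> {}" if "0 \<le> \<alpha>" "\<alpha> \<le> 1" for \<alpha>
    using coupling_exists[of "mu_A H w \<alpha> h" "mu_B H w \<alpha> h" V] mu_A_nonneg[OF wd that] mu_B_nonneg[OF wd that]
      mass_A[OF wd ll sc cV h] mass_B[OF wd ll sc cV h]
    unfolding S_def by blast
  have Sbdd: "bdd_below (S \<alpha>)" for \<alpha>
  proof (rule bdd_belowI)
    fix s assume "s \<in> S \<alpha>"
    then obtain \<pi> where "s = cost \<pi>" "coupling V (mu_A H w \<alpha> h) (mu_B H w \<alpha> h) \<pi>" unfolding S_def by blast
    then show "0 \<le> s" unfolding cost_def coupling_def
      using qdist_nonneg[OF wd sc] by (auto intro!: sum_nonneg mult_nonneg_nonneg)
  qed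
  have Wconv: "W (u * a + v * b) \<le> u * W a + v * W b"
    if a: "a \<in> {0..1}" and b: "b \<in> {0..1}" and u: "0 \<le> u" and v: "0 \<le> v" and uv: "u + v = 1" for a b u v :: real
  proof -
    show ?thesis unfolding WS
    proof (rule inf_comb[OF Sne Sne u v uv])
      fix x y assume x: "x \<in> S a" and y: "y \<in> S b"
      obtain \<pi>1 where p1: "x = cost \<pi>1" "coupling V (mu_A H w a h) (mu_B H w a h) \<pi>1"
        using x unfolding S_def by blast
      obtain \<pi>2 where p2: "y = cost \<pi>2" "coupling V (mu_A H w b h) (mu_B H w b h) \<pi>2"
        using y unfolding S_def by blast
      define \<pi> where "\<pi> p q = u * \<pi>1 p q + v * \<pi>2 p q" for p q
      have "coupling V (mu_A H w (u * a + v * b) h) (mu_B H w (u * a + v * b) h) \<pi>"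
        using p1(2) p2(2) u v unfolding coupling_def \<pi>_def mu_A_affine[OF uv] mu_B_affine[OF uv]
        by (simp add: sum.distrib sum_distrib_left[symmetric])
      then have "cost \<pi> \<in> S (u * a + v * b)" unfolding S_def by blast
      then have "Inf (S (u * a + v * b)) \<le> cost \<pi>" by (rule cInf_lower[OF _ Sbdd])
      also have "cost \<pi> = u * x + v * y" unfolding p1 p2 cost_def \<pi>_def
        by (simp add: sum.distrib sum_distrib_left algebra_simps)
      finally show "Inf (S (u * a + v * b)) \<le> u * x + v * y" .
    qed (use a b in auto)
  qed
  have L: "0 \<le> Lh H w h" by (rule Lh_nonneg[OF wd sc h])
  have kW: "kappa V H w \<alpha> h = 1 - W \<alpha> / Lh H w h" for \<alpha> unfolding kappa_def W_def by simp
  show ?thesis unfolding concave_on_iff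
  proof (intro conjI ballI allI impI)
    show "convex {0..1::real}" by (rule convex_real_interval)
  next
    fix a b u v :: real assume a: "a \<in> {0..1}" and b: "b \<in> {0..1}" and u: "0 \<le> u" and v: "0 \<le> v" and uv: "u + v = 1"
    have "W (u * a + v * b) / Lh H w h \<le> (u * W a + v * W b) / Lh H w h"
      using Wconv[OF a b u v uv] L by (rule divide_right_mono)
    then have "u * (1 - W a / Lh H w h) + v * (1 - W b / Lh H w h) \<le> 1 - W (u * a + v * b) / Lh H w h"
      using uv by (simp add: add_divide_distrib algebra_simps)
    then show "u * kappa V H w a h + v * kappa V H w b h \<le> kappa V H w (u *\<^sub>R a + v *\<^sub>R b) h"
      unfolding kW by simp
  qed
qed

end
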